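(* Let $X$ be a unital prime Banach algebra containing a nontrivial idempotent element. Let $h:X\to X$ be an odd mapping and $\phi,\psi:X^2\to[0,\infty)$ satisfy $$\|h(xyx)-h(x)yx-xh(y)x-xyh(x)\|\le\psi(x,y),$$ $$\|h(x+my)+h(x-my)-2h(x)+2m^2h(y)-m^2h(2y)\|\le\phi(x,y)$$ for all $x,y\in X$, for some fixed nonzero even integer $m$. Assume that for all $x,y\in X$ $$\Phi(x):=\sum_{k=0}^{\infty}2^{-k}\phi(0,2^kx)<\infty,\qquad \liminf_{k\to\infty}2^{-3k}\psi(2^kx,2^ky)=0,\qquad \liminf_{k\to\infty}2^{-2k}\psi(2^kx,y)=0.$$ Then $h$ is a derivation.
   Context: An algebra $X$ is prime if it is nontrivial and for any $a,b\in X$, $arb=0$ for all $r\in X$ implies $a=0$ or $b=0$. A nontrivial idempotent is an element $e$ with $e^2=e$, $e\neq0$, $e\neq\mathbf{1}$. A derivation is an additive map $D:X\to X$ with $D(xy)=D(x)y+xD(y)$ for all $x,y\in X$. *)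

theory Defs
  imports "HOL-Analysis.Analysis"
begin

definition prime_algebra :: "'a::ring_1 itself \<Rightarrow> bool" where
  "prime_algebra _ \<longleftrightarrow> (0::'a) \<noteq> 1 \<and>
     (\<forall>a b::'a. (\<forall>r. a * r * b = 0) \<longrightarrow> a = 0 \<or> b = 0)"

definition nontrivial_idempotent :: "'a::ring_1 \<Rightarrow> bool" where
  "nontrivial_idempotent e \<longleftrightarrow> e * e = e \<and> e \<noteq> 0 \<and> e \<noteq> 1"

definition derivation :: "('a::ring \<Rightarrow> 'a) \<Rightarrow> bool" where
  "derivation D \<longleftrightarrow> (\<forall>x y. D (x + y) = D x + D y) \<and>
     (\<forall>x y. D (x * y) = D x * y + x * D y)"

end

theory Submission
  imports Defs
begin

locale jt =
  fixes D :: "'a::ring_1 \<Rightarrow> 'a" and e f :: 'a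
  assumes J: "\<And>x y. D (x*y*x) = D x * y * x + x * D y * x + x * y * D x"
  and tf: "\<And>z::'a. z + z = 0 \<Longrightarrow> z = 0"
  and prime: "\<And>a b::'a. (\<And>r. a*r*b = 0) \<Longrightarrow> a = 0 \<or> b = 0"
  and ee: "e*e = e" and ff: "f*f = f" and ef: "e*f = 0" and fe: "f*e = 0"
  and ef1: "e + f = 1"
  and e0: "e \<noteq> 0" and f0: "f \<noteq> 0"
  and De: "D e = 0" and Df: "D f = 0"
begin

lemma swap: "jt D f e"
proof
  show "f + e = 1" using ef1 by (simp add: add.commute)
qed (use J tf prime ee ff ef fe e0 f0 De Df in blast)+

lemma ee': "e*(e*x) = e*x" by (simp add: mult.assoc[symmetric] ee)
lemma ff': "f*(f*x) = f*x" by (simp add: mult.assoc[symmetric] ff)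
lemma ef': "e*(f*x) = 0" by (simp add: mult.assoc[symmetric] ef)
lemma fe': "f*(e*x) = 0" by (simp add: mult.assoc[symmetric] fe)

lemmas pe = mult.assoc ee ff ef fe ee' ff' ef' fe'

lemma D0: "D 0 = 0"
  using J[of 0 0] by simp

lemma D1: "D 1 = 0"
  using J[of 1 1] tf[of "D 1"] by (simp add: algebra_simps)

lemma decomp: "x = e*x*e + e*x*f + f*x*e + f*x*f"
proof -
  have "(e+f)*x*(e+f) = e*x*e + e*x*f + f*x*e + f*x*f" by (simp add: algebra_simps)
  thus ?thesis by (simp add: ef1)
qed

lemma zero4: "e*T*e = 0 \<Longrightarrow> e*T*f = 0 \<Longrightarrow> f*T*e = 0 \<Longrightarrow> f*T*f = 0 \<Longrightarrow> T = 0"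
  using decomp[of T] by simp

lemma corner: "D (e*y*e) = e * D y * e"
  using J[of e y] by (simp add: De)

lemma cornerD: "D (e*a*e) = e * D (e*a*e) * e"
  using corner[of "e*a*e"] by (simp add: pe)

lemma trip: "p*(D (a+b) - D a - D b)*p = D (p*(a+b)*p) - D (p*a*p) - D (p*b*p)"
proof -
  have 1: "D (p*(a+b)*p) = D p * (a+b) * p + p * D (a+b) * p + p * (a+b) * D p" by (rule J)
  have 2: "D (p*a*p) = D p * a * p + p * D a * p + p * a * D p" by (rule J)
  have 3: "D (p*b*p) = D p * b * p + p * D b * p + p * b * D p" by (rule J)
  show ?thesis unfolding 1 2 3 by (simp add: algebra_simps)
qed


lemma trip4: "p*(D (a+b+c+d) - D a - D b - D c - D d)*p
   = D (p*(a+b+c+d)*p) - D (p*a*p) - D (p*b*p) - D (p*c*p) - D (p*d*p)"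
proof -
  have 1: "D (p*(a+b+c+d)*p) = D p * (a+b+c+d) * p + p * D (a+b+c+d) * p + p * (a+b+c+d) * D p" by (rule J)
  have 2: "D (p*a*p) = D p * a * p + p * D a * p + p * a * D p" by (rule J)
  have 3: "D (p*b*p) = D p * b * p + p * D b * p + p * b * D p" by (rule J)
  have 4: "D (p*c*p) = D p * c * p + p * D c * p + p * c * D p" by (rule J)
  have 5: "D (p*d*p) = D p * d * p + p * D d * p + p * d * D p" by (rule J)
  show ?thesis unfolding 1 2 3 4 5 by (simp add: algebra_simps)
qed

lemma cornerf: "D (f*y*f) = f * D y * f"
  using J[of f y] by (simp add: Df)

lemma R1: "D (e*a*e + e*b*f) = D (e*a*e) + D (e*b*f)"
proof -
  define T where "T = D (e*a*e + e*b*f) - D (e*a*e) - D (e*b*f)"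
  have "e*T*e = D (e*(e*a*e + e*b*f)*e) - D (e*(e*a*e)*e) - D (e*(e*b*f)*e)"
    unfolding T_def corner by (simp add: algebra_simps)
  also have "\<dots> = 0" by (simp add: pe algebra_simps D0)
  finally have tE: "e*T*e = 0" .
  have "f*T*f = D (f*(e*a*e + e*b*f)*f) - D (f*(e*a*e)*f) - D (f*(e*b*f)*f)"
    unfolding T_def cornerf by (simp add: algebra_simps)
  also have "\<dots> = 0" by (simp add: pe algebra_simps D0)
  finally have tF: "f*T*f = 0" .
  have a1: "f*z*e*T*f = 0" for z
  proof -
    define p where "p = f + f*z*e"
    have "p*T*p = D (p*(e*a*e + e*b*f)*p) - D (p*(e*a*e)*p) - D (p*(e*b*f)*p)"
      unfolding T_def by (rule trip)
    also have "\<dots> = 0"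
    proof -
      have "p*(e*a*e + e*b*f)*p = p*(e*b*f)*p" "p*(e*a*e)*p = 0"
        by (simp_all add: p_def pe algebra_simps)
      thus ?thesis by (simp add: D0)
    qed
    finally have "f*(p*T*p)*f = 0" by simp
    moreover have "f*(p*T*p)*f = f*z*e*T*f + f*T*f" by (simp add: p_def pe algebra_simps)
    ultimately show ?thesis using tF by simp
  qed
  have "e*T*f = 0"
    using prime[of f "e*T*f"] a1 f0 by (simp add: mult.assoc)
  have a2: "e*z*f*T*e = 0" for z
  proof -
    define p where "p = e + e*z*f"
    have "p*T*p = D (p*(e*a*e + e*b*f)*p) - D (p*(e*a*e)*p) - D (p*(e*b*f)*p)"
      unfolding T_def by (rule trip)
    also have "\<dots> = 0"
    proof -
      have "p*(e*a*e + e*b*f)*p = p*(e*a*e)*p" "p*(e*b*f)*p = 0"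
        by (simp_all add: p_def pe algebra_simps)
      thus ?thesis by (simp add: D0)
    qed
    finally have "e*(p*T*p)*e = 0" by simp
    moreover have "e*(p*T*p)*e = e*z*f*T*e + e*T*e" by (simp add: p_def pe algebra_simps)
    ultimately show ?thesis using tE by simp
  qed
  have "f*T*e = 0"
    using prime[of e "f*T*e"] a2 e0 by (simp add: mult.assoc)
  hence "T = 0" using zero4 tE tF \<open>e*T*f = 0\<close> by blast
  thus ?thesis unfolding T_def by (simp add: algebra_simps)
qed

lemma R1b: "D (e*a*e + f*c*e) = D (e*a*e) + D (f*c*e)"
proof -
  define T where "T = D (e*a*e + f*c*e) - D (e*a*e) - D (f*c*e)"
  have "e*T*e = D (e*(e*a*e + f*c*e)*e) - D (e*(e*a*e)*e) - D (e*(f*c*e)*e)"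
    unfolding T_def corner by (simp add: algebra_simps)
  also have "\<dots> = 0" by (simp add: pe algebra_simps D0)
  finally have tE: "e*T*e = 0" .
  have "f*T*f = D (f*(e*a*e + f*c*e)*f) - D (f*(e*a*e)*f) - D (f*(f*c*e)*f)"
    unfolding T_def cornerf by (simp add: algebra_simps)
  also have "\<dots> = 0" by (simp add: pe algebra_simps D0)
  finally have tF: "f*T*f = 0" .
  have a1: "f*T*e*z*f = 0" for z
  proof -
    define p where "p = f + e*z*f"
    have "p*T*p = D (p*(e*a*e + f*c*e)*p) - D (p*(e*a*e)*p) - D (p*(f*c*e)*p)"
      unfolding T_def by (rule trip)
    also have "\<dots> = 0"
    proof -
      have "p*(e*a*e + f*c*e)*p = p*(f*c*e)*p" "p*(e*a*e)*p = 0"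
        by (simp_all add: p_def pe algebra_simps)
      thus ?thesis by (simp add: D0)
    qed
    finally have "f*(p*T*p)*f = 0" by simp
    moreover have "f*(p*T*p)*f = f*T*e*z*f + f*T*f" by (simp add: p_def pe algebra_simps)
    ultimately show ?thesis using tF by simp
  qed
  have "f*T*e = 0"
    using prime[of "f*T*e" f] a1 f0 by (simp add: mult.assoc)
  have a2: "e*T*f*z*e = 0" for z
  proof -
    define p where "p = e + f*z*e"
    have "p*T*p = D (p*(e*a*e + f*c*e)*p) - D (p*(e*a*e)*p) - D (p*(f*c*e)*p)"
      unfolding T_def by (rule trip)
    also have "\<dots> = 0"
    proof -
      have "p*(e*a*e + f*c*e)*p = p*(e*a*e)*p" "p*(f*c*e)*p = 0"
        by (simp_all add: p_def pe algebra_simps)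
      thus ?thesis by (simp add: D0)
    qed
    finally have "e*(p*T*p)*e = 0" by simp
    moreover have "e*(p*T*p)*e = e*T*f*z*e + e*T*e" by (simp add: p_def pe algebra_simps)
    ultimately show ?thesis using tE by simp
  qed
  have "e*T*f = 0"
    using prime[of "e*T*f" e] a2 e0 by (simp add: mult.assoc)
  hence "T = 0" using zero4 tE tF \<open>f*T*e = 0\<close> by blast
  thus ?thesis unfolding T_def by (simp add: algebra_simps)
qed


lemma Dp: "D (e + e*y*f) = D (e*y*f)"
  using R1[of e y] by (simp add: pe De)

lemma star: "e*y*f*D (e*x*f)*e + e*x*f*D (e*y*f)*e = 0"
proof -
  define b where "b = e*x*f"
  define s where "s = e*y*f"
  define p where "p = e + s"
  have Dps: "D p = D s" unfolding p_def s_def by (rule Dp)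
  have pbp: "p*b*p = 0" by (simp add: p_def b_def s_def pe algebra_simps)
  have "e*D (p*b*p)*e = e*(D p*b*p)*e + e*(p*D b*p)*e + e*(p*b*D p)*e"
    using J[of p b] by (simp add: algebra_simps)
  moreover have "e*D (p*b*p)*e = 0" by (simp add: pbp D0)
  moreover have "e*(D p*b*p)*e = 0" by (simp add: p_def b_def s_def pe algebra_simps)
  moreover have "e*(p*D b*p)*e = e*D b*e + s*D b*e" by (simp add: p_def s_def pe algebra_simps)
  moreover have "e*D b*e = 0" using corner[of b] by (simp add: b_def pe D0)
  moreover have "e*(p*b*D p)*e = b*D s*e" unfolding Dps by (simp add: p_def b_def s_def pe algebra_simps)
  ultimately have "s*D b*e + b*D s*e = 0" by simp
  thus ?thesis by (simp add: b_def s_def)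
qed

lemma Dw_fe: "f*D (1 + e*x*f)*e = f*D (e*x*f)*e"
proof -
  define b where "b = e*x*f"
  define w where "w = 1 + b"
  have "w*e*w = e + e*x*f" by (simp add: w_def b_def pe algebra_simps)
  hence "D (w*e*w) = D b" by (simp add: Dp b_def)
  moreover have "f*D (w*e*w)*e = f*(D w*e*w)*e + f*(w*D e*w)*e + f*(w*e*D w)*e"
    using J[of w e] by (simp add: algebra_simps)
  moreover have "f*(D w*e*w)*e = f*D w*e" by (simp add: w_def b_def pe algebra_simps)
  moreover have "f*(w*e*D w)*e = 0" by (simp add: w_def b_def pe algebra_simps)
  ultimately show ?thesis by (simp add: De w_def b_def)
qed

lemma phi_bd: "f*D (e*x*f*(f*z*f))*e = f*z*f*(f*D (e*x*f)*e)"
proof -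
  define b where "b = e*x*f"
  define d where "d = f*z*f"
  define w where "w = 1 + b"
  have wdw: "w*d*w = f*z*f + e*(x*f*z)*f" by (simp add: w_def b_def d_def pe algebra_simps)
  have spl: "D (f*z*f + e*(x*f*z)*f) = D (f*z*f) + D (e*(x*f*z)*f)"
    by (rule jt.R1b[OF swap])
  have "f*D (w*d*w)*e = f*(D w*d*w)*e + f*(w*D d*w)*e + f*(w*d*D w)*e"
    using J[of w d] by (simp add: algebra_simps)
  moreover have "f*(D w*d*w)*e = 0" by (simp add: w_def b_def d_def pe algebra_simps)
  moreover have "f*(w*D d*w)*e = 0" unfolding d_def cornerf by (simp add: w_def b_def pe algebra_simps)
  moreover have "f*(w*d*D w)*e = d*(f*D w*e)" by (simp add: w_def b_def d_def pe algebra_simps)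
  moreover have "f*D (w*d*w)*e = f*D (e*(x*f*z)*f)*e"
    unfolding wdw spl using cornerf[of z] by (simp add: pe algebra_simps)
  ultimately have "f*D (e*(x*f*z)*f)*e = d*(f*D w*e)" by simp
  also have "f*D w*e = f*D b*e" unfolding w_def b_def by (rule Dw_fe)
  finally show ?thesis by (simp add: b_def d_def pe)
qed

lemma R2: "f*D (e*x*f)*e = 0"
proof -
  define b where "b = e*x*f"
  have "e*x*f*(f*z*f)*(f*D b*e) = 0" for z
  proof -
    have "e*(x*f*z)*f*D b*e + b*D (e*(x*f*z)*f)*e = 0" unfolding b_def by (rule star)
    moreover have "b*D (e*(x*f*z)*f)*e = b*(f*D (e*x*f*(f*z*f))*e)"
      by (simp add: b_def pe)
    moreover have "e*(x*f*z)*f*D b*e = e*x*f*(f*z*f)*(f*D b*e)" by (simp add: b_def pe)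
    ultimately have "e*x*f*(f*z*f)*(f*D b*e) + e*x*f*(f*z*f)*(f*D b*e) = 0"
      unfolding phi_bd b_def by (simp add: pe)
    thus ?thesis by (rule tf)
  qed
  hence "e*x*f = 0 \<or> f*D b*e = 0"
    using prime[of "e*x*f" "f*D b*e"] by (simp add: pe)
  thus ?thesis by (auto simp: b_def D0)
qed

lemma Doff: "D (e*x*f) = e*D (e*x*f)*f"
proof -
  define T where "T = D (e*x*f) - e*D (e*x*f)*f"
  have "T = 0"
  proof (rule zero4)
    show "e*T*e = 0" unfolding T_def using corner[of "e*x*f"] by (simp add: pe algebra_simps D0)
    show "f*T*f = 0" unfolding T_def using cornerf[of "e*x*f"] by (simp add: pe algebra_simps D0)
    show "e*T*f = 0" unfolding T_def by (simp add: pe algebra_simps)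
    show "f*T*e = 0" unfolding T_def using R2[of x] by (simp add: pe algebra_simps)
  qed
  thus ?thesis unfolding T_def by simp
qed


lemma Dw: "D (1 + e*x*f) = D (e*x*f)"
proof -
  define b where "b = e*x*f"
  define w where "w = 1 + b"
  define g where "g = D w"
  have "g = e*g*f"
  proof -
    define T where "T = g - e*g*f"
    have "T = 0"
    proof (rule zero4)
      have "e*w*e = e" by (simp add: w_def b_def pe algebra_simps)
      hence "e*g*e = 0" unfolding g_def using corner[of w] De by simp
      thus "e*T*e = 0" unfolding T_def by (simp add: pe algebra_simps)
      have "f*w*f = f" by (simp add: w_def b_def pe algebra_simps)
      hence "f*g*f = 0" unfolding g_def using cornerf[of w] Df by simp
      thus "f*T*f = 0" unfolding T_def by (simp add: pe algebra_simps)
      show "e*T*f = 0" unfolding T_def by (simp add: pe algebra_simps)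
      have "f*g*e = 0" unfolding g_def w_def b_def using Dw_fe[of x] R2[of x] by simp
      thus "f*T*e = 0" unfolding T_def by (simp add: pe algebra_simps)
    qed
    thus ?thesis unfolding T_def by simp
  qed
  then obtain c where gc: "g = e*c*f" by blast
  have "w*e*w = e + e*x*f" by (simp add: w_def b_def pe algebra_simps)
  hence "D b = D (w*e*w)" by (simp add: Dp b_def)
  also have "\<dots> = g*e*w + w*e*g" using J[of w e] by (simp add: De g_def)
  also have "\<dots> = g" unfolding gc by (simp add: w_def b_def pe algebra_simps)
  finally show ?thesis by (simp add: g_def w_def b_def)
qed

lemma Doff_ex: "\<exists>c. D (e*x*f) = e*c*f"
  using Doff by blast

lemma R4: "D (e*a*f + e*b*f) = D (e*a*f) + D (e*b*f)"
proof -
  define w where "w = 1 + e*a*f"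
  obtain c where gc: "D w = e*c*f" unfolding w_def Dw using Doff_ex by blast
  obtain c' where gc': "D (e*b*f) = e*c'*f" using Doff_ex by blast
  have "w*(e + e*b*f)*w = e + e*(a+b)*f" by (simp add: w_def pe algebra_simps)
  hence "D (e*(a+b)*f) = D (w*(e + e*b*f)*w)" by (simp add: Dp)
  also have "\<dots> = D w * (e + e*b*f) * w + w * D (e + e*b*f) * w + w * (e + e*b*f) * D w"
    by (rule J)
  also have "\<dots> = e*c*f + e*c'*f" unfolding Dp gc gc' by (simp add: w_def pe algebra_simps)
  finally have 1: "D (e*(a+b)*f) = e*c*f + e*c'*f" .
  have "D (e*a*f) = e*c*f" using gc unfolding w_def Dw .
  thus ?thesis using 1 gc' by (simp add: algebra_simps)
qed

lemma cornerD_ex: "\<exists>k. D (e*a*e) = e*k*e"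
  using cornerD by blast

lemma R5a: "D (e*a*e*(e*x*f)) = D (e*a*e)*(e*x*f) + e*a*e*D (e*x*f)"
proof -
  define w where "w = 1 + e*x*f"
  obtain c where gc: "D w = e*c*f" unfolding w_def Dw using Doff_ex by blast
  have gs: "D (e*x*f) = e*c*f" using gc unfolding w_def Dw .
  obtain k where dk: "D (e*a*e) = e*k*e" using cornerD_ex by blast
  have "w*(e*a*e)*w = e*a*e + e*(a*e*x)*f" by (simp add: w_def pe algebra_simps)
  hence "D (e*a*e) + D (e*(a*e*x)*f) = D (w*(e*a*e)*w)" by (simp add: R1)
  also have "\<dots> = D w * (e*a*e) * w + w * D (e*a*e) * w + w * (e*a*e) * D w"
    by (rule J)
  also have "\<dots> = e*k*e + e*k*e*(e*x*f) + e*a*e*(e*c*f)"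
    unfolding gc dk by (simp add: w_def pe algebra_simps)
  finally show ?thesis unfolding dk gs by (simp add: pe algebra_simps)
qed

lemma R5a': "D (e*x*f*(f*z*f)) = D (e*x*f)*(f*z*f) + e*x*f*D (f*z*f)"
proof -
  define w where "w = 1 + e*x*f"
  obtain c where gc: "D w = e*c*f" unfolding w_def Dw using Doff_ex by blast
  have gs: "D (e*x*f) = e*c*f" using gc unfolding w_def Dw .
  obtain k where dk: "D (f*z*f) = f*k*f" using jt.cornerD_ex[OF swap] by blast
  have "w*(f*z*f)*w = f*z*f + e*(x*f*z)*f" by (simp add: w_def pe algebra_simps)
  hence "D (f*z*f) + D (e*(x*f*z)*f) = D (w*(f*z*f)*w)" by (simp add: jt.R1b[OF swap])
  also have "\<dots> = D w * (f*z*f) * w + w * D (f*z*f) * w + w * (f*z*f) * D w"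
    by (rule J)
  also have "\<dots> = f*k*f + e*c*f*(f*z*f) + e*x*f*(f*k*f)"
    unfolding gc dk by (simp add: w_def pe algebra_simps)
  finally show ?thesis unfolding dk gs by (simp add: pe algebra_simps)
qed

lemma R5: "D (e*a*e + e*b*e) = D (e*a*e) + D (e*b*e)"
proof -
  define T where "T = D (e*a*e + e*b*e) - D (e*a*e) - D (e*b*e)"
  have sum: "e*a*e + e*b*e = e*(a+b)*e" by (simp add: algebra_simps)
  have Te: "T = e*T*e" unfolding T_def sum
    using cornerD[of "a+b"] cornerD[of a] cornerD[of b] by (simp add: algebra_simps pe)
  have Ts: "T*(e*x*f) = 0" for x
  proof -
    have 1: "D (e*(a+b)*e*(e*x*f)) = D (e*(a+b)*e)*(e*x*f) + e*(a+b)*e*D (e*x*f)" by (rule R5a)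
    have 2: "D (e*(a*e*x)*f + e*(b*e*x)*f) = D (e*(a*e*x)*f) + D (e*(b*e*x)*f)" by (rule R4)
    have 3: "D (e*(a*e*x)*f) = D (e*a*e)*(e*x*f) + e*a*e*D (e*x*f)" using R5a[of a x] by (simp add: pe)
    have 4: "D (e*(b*e*x)*f) = D (e*b*e)*(e*x*f) + e*b*e*D (e*x*f)" using R5a[of b x] by (simp add: pe)
    have 5: "e*(a+b)*e*(e*x*f) = e*(a*e*x)*f + e*(b*e*x)*f" by (simp add: pe algebra_simps)
    have "D (e*(a+b)*e)*(e*x*f) = D (e*a*e)*(e*x*f) + D (e*b*e)*(e*x*f)"
      using 1 2 3 4 unfolding 5 by (simp add: algebra_simps)
    thus ?thesis unfolding T_def sum by (simp add: algebra_simps)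
  qed
  have "T*r*f = 0" for r
  proof -
    have a: "T*r*f = (e*T*e)*r*f" using Te by (rule arg_cong)
    have b: "T*(e*r*f) = (e*T*e)*(e*r*f)" using Te by (rule arg_cong)
    have "T*r*f = T*(e*r*f)" unfolding a b by (simp add: pe)
    thus ?thesis using Ts by simp
  qed
  hence "T = 0" using prime[of T f] f0 by blast
  thus ?thesis unfolding T_def by (simp add: algebra_simps)
qed


lemma R6a: "e*(D x - (D (e*x*e) + D (e*x*f) + D (f*x*e) + D (f*x*f)))*f = 0"
proof -
  define T where "T = D x - (D (e*x*e) + D (e*x*f) + D (f*x*e) + D (f*x*f))"
  have dx: "e*x*e + e*x*f + f*x*e + f*x*f = x" using decomp[of x] by simp
  have tF: "f*T*f = 0"
  proof -
    have "f*T*f = D (f*x*f) - (D (f*(e*x*e)*f) + D (f*(e*x*f)*f) + D (f*(f*x*e)*f) + D (f*(f*x*f)*f))"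
      unfolding T_def cornerf by (simp add: algebra_simps)
    thus ?thesis by (simp add: pe D0)
  qed
  have a1: "f*z*e*T*f = 0" for z
  proof -
    define p where "p = f + f*z*e"
    have "p*T*p = D (p*x*p) - D (p*(e*x*e)*p) - D (p*(e*x*f)*p) - D (p*(f*x*e)*p) - D (p*(f*x*f)*p)"
      using trip4[of p "e*x*e" "e*x*f" "f*x*e" "f*x*f"] unfolding dx T_def by (simp add: algebra_simps)
    also have "\<dots> = 0"
    proof -
      have z1: "p*(e*x*e)*p = 0" "p*(f*x*e)*p = 0" by (simp_all add: p_def pe algebra_simps)
      have z2: "p*(e*x*f)*p = f*(z*e*x)*f + f*(z*e*x*f*z)*e" by (simp add: p_def pe algebra_simps)
      have z3: "p*(f*x*f)*p = f*x*f + f*(x*f*z)*e" by (simp add: p_def pe algebra_simps)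
      have z4: "p*x*p = f*(x + z*e*x)*f + f*(x*f*z + z*e*x*f*z)*e" by (simp add: p_def pe algebra_simps)
      have s1: "f*(x + z*e*x)*f = f*x*f + f*(z*e*x)*f" by (simp add: algebra_simps)
      have s2: "f*(x*f*z + z*e*x*f*z)*e = f*(x*f*z)*e + f*(z*e*x*f*z)*e" by (simp add: algebra_simps)
      show ?thesis unfolding z1 z2 z3 z4 jt.R1[OF swap] unfolding s1 s2 jt.R5[OF swap] jt.R4[OF swap]
        by (simp add: D0)
    qed
    finally have "f*(p*T*p)*f = 0" by simp
    moreover have "f*(p*T*p)*f = f*z*e*T*f + f*T*f" by (simp add: p_def pe algebra_simps)
    ultimately show ?thesis using tF by simp
  qed
  have "e*T*f = 0"
    using prime[of f "e*T*f"] a1 f0 by (simp add: mult.assoc)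
  thus ?thesis unfolding T_def .
qed

lemma R6: "D x = D (e*x*e) + D (e*x*f) + D (f*x*e) + D (f*x*f)"
proof -
  define T where "T = D x - (D (e*x*e) + D (e*x*f) + D (f*x*e) + D (f*x*f))"
  have "T = 0"
  proof (rule zero4)
    have "e*T*e = D (e*x*e) - (D (e*(e*x*e)*e) + D (e*(e*x*f)*e) + D (e*(f*x*e)*e) + D (e*(f*x*f)*e))"
      unfolding T_def corner by (simp add: algebra_simps)
    thus "e*T*e = 0" by (simp add: pe D0)
    have "f*T*f = D (f*x*f) - (D (f*(e*x*e)*f) + D (f*(e*x*f)*f) + D (f*(f*x*e)*f) + D (f*(f*x*f)*f))"
      unfolding T_def cornerf by (simp add: algebra_simps)
    thus "f*T*f = 0" by (simp add: pe D0)
    show "e*T*f = 0" unfolding T_def by (rule R6a)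
    have "f*(D x - (D (f*x*f) + D (f*x*e) + D (e*x*f) + D (e*x*e)))*e = 0" by (rule jt.R6a[OF swap])
    thus "f*T*e = 0" unfolding T_def by (simp add: add_ac)
  qed
  thus ?thesis unfolding T_def by simp
qed

lemma ADD: "D (x + y) = D x + D y"
proof -
  have "D (x + y) = D (e*(x+y)*e) + D (e*(x+y)*f) + D (f*(x+y)*e) + D (f*(x+y)*f)" by (rule R6)
  also have "\<dots> = D (e*x*e + e*y*e) + D (e*x*f + e*y*f) + D (f*x*e + f*y*e) + D (f*x*f + f*y*f)"
    by (simp add: algebra_simps)
  also have "\<dots> = (D (e*x*e) + D (e*x*f) + D (f*x*e) + D (f*x*f)) + (D (e*y*e) + D (e*y*f) + D (f*y*e) + D (f*y*f))"
    unfolding R5 R4 jt.R4[OF swap] jt.R5[OF swap] by (simp add: algebra_simps)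
  also have "\<dots> = D x + D y" using R6[of x] R6[of y] by simp
  finally show ?thesis .
qed


lemma L111: "D (e*a*e*(e*b*e)) = D (e*a*e)*(e*b*e) + e*a*e*D (e*b*e)"
proof -
  define T where "T = D (e*a*e*(e*b*e)) - D (e*a*e)*(e*b*e) - e*a*e*D (e*b*e)"
  have pr: "e*a*e*(e*b*e) = e*(a*e*b)*e" by (simp add: pe)
  have Te: "T = e*T*e"
  proof -
    obtain k where k: "D (e*(a*e*b)*e) = e*k*e" using cornerD_ex by blast
    obtain k1 where k1: "D (e*a*e) = e*k1*e" using cornerD_ex by blast
    obtain k2 where k2: "D (e*b*e) = e*k2*e" using cornerD_ex by blast
    show ?thesis unfolding T_def pr k k1 k2 by (simp add: algebra_simps pe)
  qed
  have Ts: "T*(e*x*f) = 0" for x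
  proof -
    have 1: "D (e*(a*e*b)*e*(e*x*f)) = D (e*(a*e*b)*e)*(e*x*f) + e*(a*e*b)*e*D (e*x*f)" by (rule R5a)
    have 2: "D (e*a*e*(e*(b*e*x)*f)) = D (e*a*e)*(e*(b*e*x)*f) + e*a*e*D (e*(b*e*x)*f)" by (rule R5a)
    have 3: "D (e*b*e*(e*x*f)) = D (e*b*e)*(e*x*f) + e*b*e*D (e*x*f)" by (rule R5a)
    have q1: "e*(a*e*b)*e*(e*x*f) = e*a*e*(e*(b*e*x)*f)" by (simp add: pe)
    have q2: "e*(b*e*x)*f = e*b*e*(e*x*f)" by (simp add: pe)
    have "D (e*(a*e*b)*e)*(e*x*f) = D (e*a*e)*(e*b*e)*(e*x*f) + e*a*e*D (e*b*e)*(e*x*f)"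
      using 1 2 3 unfolding q1 q2 by (simp add: algebra_simps pe)
    thus ?thesis unfolding T_def pr by (simp add: algebra_simps)
  qed
  have "T*r*f = 0" for r
  proof -
    have a: "T*r*f = (e*T*e)*r*f" using Te by (rule arg_cong)
    have b: "T*(e*r*f) = (e*T*e)*(e*r*f)" using Te by (rule arg_cong)
    have "T*r*f = T*(e*r*f)" unfolding a b by (simp add: pe)
    thus ?thesis using Ts by simp
  qed
  hence "T = 0" using prime[of T f] f0 by blast
  thus ?thesis unfolding T_def by (simp add: algebra_simps)
qed

lemma Doff_ex': "\<exists>c. D (f*x*e) = f*c*e"
  using jt.Doff_ex[OF swap] .

lemma cornerD_ex': "\<exists>k. D (f*a*f) = f*k*f"
  using jt.cornerD_ex[OF swap] .

lemma L121: "D (e*x*f*(f*z*e)) = D (e*x*f)*(f*z*e) + e*x*f*D (f*z*e)"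
proof -
  define p where "p = e + e*x*f"
  define r where "r = f*z*e"
  obtain c where gc: "D (e*x*f) = e*c*f" using Doff_ex by blast
  obtain c' where gc': "D r = f*c'*e" unfolding r_def using Doff_ex' by blast
  have Dp': "D p = e*c*f" unfolding p_def Dp gc ..
  have "e*(p*r*p)*e = e*(x*f*z)*e" by (simp add: p_def r_def pe algebra_simps)
  hence "D (e*(x*f*z)*e) = D (e*(p*r*p)*e)" by simp
  also have "\<dots> = e*D (p*r*p)*e" by (rule corner)
  also have "\<dots> = e*(D p * r * p + p * D r * p + p * r * D p)*e" using J[of p r] by simp
  also have "\<dots> = e*c*f*(f*z*e) + e*x*f*(f*c'*e)"
    unfolding Dp' gc' by (simp add: p_def r_def pe algebra_simps)
  finally show ?thesis using gc gc' unfolding r_def by (simp add: pe)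
qed

lemma rowE: "D (e*a*e*y) = D (e*a*e)*y + e*a*e*D y"
proof -
  have dy: "y = e*y*e + e*y*f + f*y*e + f*y*f" by (rule decomp)
  have "e*a*e*y = e*a*e*(e*y*e + e*y*f + f*y*e + f*y*f)" using dy by (rule arg_cong)
  hence eq: "e*a*e*y = e*(a*e*y*e)*e + e*(a*e*y)*f" by (simp add: pe algebra_simps)
  have 1: "D (e*a*e*(e*y*e)) = D (e*a*e)*(e*y*e) + e*a*e*D (e*y*e)" by (rule L111)
  have 2: "D (e*a*e*(e*y*f)) = D (e*a*e)*(e*y*f) + e*a*e*D (e*y*f)" by (rule R5a)
  obtain k where k: "D (e*a*e) = e*k*e" using cornerD_ex by blast
  obtain k1 where k1: "D (e*y*e) = e*k1*e" using cornerD_ex by blast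
  obtain k2 where k2: "D (e*y*f) = e*k2*f" using Doff_ex by blast
  obtain k3 where k3: "D (f*y*e) = f*k3*e" using Doff_ex' by blast
  obtain k4 where k4: "D (f*y*f) = f*k4*f" using cornerD_ex' by blast
  have "D (e*a*e*y) = D (e*a*e)*(e*y*e) + e*a*e*D (e*y*e) + (D (e*a*e)*(e*y*f) + e*a*e*D (e*y*f))"
    unfolding eq R1 using 1 2 by (simp add: pe)
  also have "\<dots> = D (e*a*e)*(e*y*e + e*y*f + f*y*e + f*y*f) + e*a*e*(D (e*y*e) + D (e*y*f) + D (f*y*e) + D (f*y*f))"
    unfolding k k1 k2 k3 k4 by (simp add: pe algebra_simps)
  also have "\<dots> = D (e*a*e)*y + e*a*e*D y" using R6[of y] dy[symmetric] by simp
  finally show ?thesis .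
qed

lemma rowEF: "D (e*x*f*y) = D (e*x*f)*y + e*x*f*D y"
proof -
  have dy: "y = e*y*e + e*y*f + f*y*e + f*y*f" by (rule decomp)
  have "e*x*f*y = e*x*f*(e*y*e + e*y*f + f*y*e + f*y*f)" using dy by (rule arg_cong)
  hence eq: "e*x*f*y = e*(x*f*y*e)*e + e*(x*f*y)*f" by (simp add: pe algebra_simps)
  have 1: "D (e*x*f*(f*y*e)) = D (e*x*f)*(f*y*e) + e*x*f*D (f*y*e)" by (rule L121)
  have 2: "D (e*x*f*(f*y*f)) = D (e*x*f)*(f*y*f) + e*x*f*D (f*y*f)" by (rule R5a')
  obtain k where k: "D (e*x*f) = e*k*f" using Doff_ex by blast
  obtain k1 where k1: "D (e*y*e) = e*k1*e" using cornerD_ex by blast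
  obtain k2 where k2: "D (e*y*f) = e*k2*f" using Doff_ex by blast
  obtain k3 where k3: "D (f*y*e) = f*k3*e" using Doff_ex' by blast
  obtain k4 where k4: "D (f*y*f) = f*k4*f" using cornerD_ex' by blast
  have "D (e*x*f*y) = D (e*x*f)*(f*y*e) + e*x*f*D (f*y*e) + (D (e*x*f)*(f*y*f) + e*x*f*D (f*y*f))"
    unfolding eq R1 using 1 2 by (simp add: pe)
  also have "\<dots> = D (e*x*f)*(e*y*e + e*y*f + f*y*e + f*y*f) + e*x*f*(D (e*y*e) + D (e*y*f) + D (f*y*e) + D (f*y*f))"
    unfolding k k1 k2 k3 k4 by (simp add: pe algebra_simps)
  also have "\<dots> = D (e*x*f)*y + e*x*f*D y" using R6[of y] dy[symmetric] by simp
  finally show ?thesis .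
qed

lemma LEIB: "D (x*y) = D x*y + x*D y"
proof -
  have dx: "x = e*x*e + e*x*f + f*x*e + f*x*f" by (rule decomp)
  have "x*y = (e*x*e + e*x*f + f*x*e + f*x*f)*y" using dx by (rule arg_cong)
  hence "x*y = e*x*e*y + e*x*f*y + f*x*e*y + f*x*f*y" by (simp add: algebra_simps)
  hence "D (x*y) = D (e*x*e*y) + D (e*x*f*y) + D (f*x*e*y) + D (f*x*f*y)" by (simp add: ADD)
  also have "\<dots> = (D (e*x*e) + D (e*x*f) + D (f*x*e) + D (f*x*f))*y + (e*x*e + e*x*f + f*x*e + f*x*f)*D y"
    unfolding rowE rowEF jt.rowE[OF swap] jt.rowEF[OF swap] by (simp add: algebra_simps)
  also have "\<dots> = D x*y + x*D y" using R6[of x] dx[symmetric] by simp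
  finally show ?thesis .
qed

end

lemma iden2:
  fixes h :: "'a::{real_normed_algebra_1, banach} \<Rightarrow> 'a"
  assumes a_def: "\<And>n z. a n z = (1 / 2^n) *\<^sub>R h ((2::real)^n *\<^sub>R z)"
  shows "a (2*k) (x*y*x) - a k x*y*x - x*h y*x - x*y*a k x
          = (1/2^(2*k)) *\<^sub>R (h (((2::real)^k *\<^sub>R x)*y*((2::real)^k *\<^sub>R x)) - h ((2::real)^k *\<^sub>R x)*y*((2::real)^k *\<^sub>R x) - ((2::real)^k *\<^sub>R x)*h y*((2::real)^k *\<^sub>R x) - ((2::real)^k *\<^sub>R x)*y*h ((2::real)^k *\<^sub>R x))"
proof -
  define c where "c = (2::real)^k"
  have c0: "c \<noteq> 0" by (simp add: c_def)
  have p2: "(2::real)^(2*k) = c*c" by (simp add: c_def mult_2 power_add)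
  have i1: "(1/(c*c)) * c = 1/c" using c0 by (simp add: field_simps)
  have t1: "(c *\<^sub>R x)*y*(c *\<^sub>R x) = (c*c) *\<^sub>R (x*y*x)" by simp
  show ?thesis unfolding c_def[symmetric] p2 t1 a_def
    by (simp add: scaleR_right_diff_distrib i1 c0)
qed

lemma iden3:
  fixes h :: "'a::{real_normed_algebra_1, banach} \<Rightarrow> 'a"
  assumes a_def: "\<And>n z. a n z = (1 / 2^n) *\<^sub>R h ((2::real)^n *\<^sub>R z)"
  shows "a (3*k) (x*y*x) - a k x*y*x - x*a k y*x - x*y*a k x
          = (1/2^(3*k)) *\<^sub>R (h (((2::real)^k *\<^sub>R x)*((2::real)^k *\<^sub>R y)*((2::real)^k *\<^sub>R x)) - h ((2::real)^k *\<^sub>R x)*((2::real)^k *\<^sub>R y)*((2::real)^k *\<^sub>R x) - ((2::real)^k *\<^sub>R x)*h ((2::real)^k *\<^sub>R y)*((2::real)^k *\<^sub>R x) - ((2::real)^k *\<^sub>R x)*((2::real)^k *\<^sub>R y)*h ((2::real)^k *\<^sub>R x))"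
proof -
  define c where "c = (2::real)^k"
  have c0: "c \<noteq> 0" by (simp add: c_def)
  have p3: "(2::real)^(3*k) = c*c*c" by (simp add: c_def numeral_3_eq_3 power_add)
  have i1: "(1/(c*c*c)) * (c*c) = 1/c" using c0 by (simp add: field_simps)
  have t1: "(c *\<^sub>R x)*(c *\<^sub>R y)*(c *\<^sub>R x) = (c*c*c) *\<^sub>R (x*y*x)" by (simp add: mult.assoc)
  show ?thesis unfolding c_def[symmetric] p3 t1 a_def
    by (simp add: scaleR_right_diff_distrib i1 c0 mult.assoc)
qed

lemma Df_lemma:
  fixes D :: "'a::ring_1 \<Rightarrow> 'a" and e f :: 'a
  assumes J: "\<And>x y. D (x*y*x) = D x * y * x + x * D y * x + x * y * D x"
  and tf: "\<And>z::'a. z + z = 0 \<Longrightarrow> z = 0"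
  and ee: "e*e = e" and ff: "f*f = f" and ef: "e*f = 0" and fe: "f*e = 0"
  and ef1: "e + f = 1" and De: "D e = 0"
  shows "D f = 0"
proof -
  have ee': "e*(e*x) = e*x" for x by (simp add: mult.assoc[symmetric] ee)
  have ff': "f*(f*x) = f*x" for x by (simp add: mult.assoc[symmetric] ff)
  have ef': "e*(f*x) = 0" for x by (simp add: mult.assoc[symmetric] ef)
  have fe': "f*(e*x) = 0" for x by (simp add: mult.assoc[symmetric] fe)
  note pe = mult.assoc ee ff ef fe ee' ff' ef' fe'
  have D1: "D 1 = 0" using J[of 1 1] tf[of "D 1"] by (simp add: algebra_simps)
  have dec: "x = e*x*e + e*x*f + f*x*e + f*x*f" for x
  proof -
    have "(e+f)*x*(e+f) = e*x*e + e*x*f + f*x*e + f*x*f" by (simp add: algebra_simps)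
    thus ?thesis by (simp add: ef1)
  qed
  define u where "u = e - f"
  have uu: "u*1*u = 1" unfolding u_def by (simp add: algebra_simps pe ef1)
  have H1: "D u * u + u * D u = 0" using J[of u 1] unfolding uu by (simp add: D1)
  have ueu: "u*e*u = e" unfolding u_def by (simp add: algebra_simps pe)
  have H2: "D u * e + e * D u = 0"
  proof -
    have "0 = D u * e * u + u * e * D u" using J[of u e] unfolding ueu by (simp add: De)
    thus ?thesis unfolding u_def by (simp add: algebra_simps pe)
  qed
  have Du: "D u = 0"
  proof -
    have a: "D u * f = D u - D u * e"
    proof -
      have "D u * (e + f) = D u" by (simp add: ef1)
      thus ?thesis by (simp add: algebra_simps)
    qed
    have b: "f * D u = D u - e * D u"
    proof -
      have "(e + f) * D u = D u" by (simp add: ef1)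
      thus ?thesis by (simp add: algebra_simps)
    qed
    have "D u * e - D u * f + (e * D u - f * D u) = 0" using H1 unfolding u_def by (simp add: algebra_simps)
    hence "(D u * e + e * D u) + (D u * e + e * D u) = D u + D u" unfolding a b by (simp add: algebra_simps)
    hence "D u + D u = 0" using H2 by simp
    thus ?thesis by (rule tf)
  qed
  have ufu: "u*f*u = f" unfolding u_def by (simp add: algebra_simps pe)
  have 1: "D f = u * D f * u" using J[of u f] unfolding ufu by (simp add: Du)
  have 2: "D f = D f * f + f * D f" using J[of f 1] by (simp add: D1 ff)
  have 3: "e * D f * e = 0"
  proof -
    have "e * D f * e = e * (D f * f + f * D f) * e" using 2 by (rule arg_cong)
    thus ?thesis by (simp add: algebra_simps pe)
  qed
  have 4: "f * D f * f = 0"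
  proof -
    have "f * D f * f = f * (D f * f + f * D f) * f" using 2 by (rule arg_cong)
    hence "f * D f * f + f * D f * f = 0" by (simp add: algebra_simps pe)
    thus ?thesis by (rule tf)
  qed
  obtain c where c: "c = D f" by blast
  have "D f = e*c*e + e*c*f + f*c*e + f*c*f" unfolding c by (rule dec)
  hence 5: "D f = e*c*f + f*c*e" using 3 4 unfolding c by simp
  have "u * D f * u = - D f" unfolding 5 u_def by (simp add: algebra_simps pe)
  hence "D f = - D f" using 1 by simp
  hence "D f + D f = 0" by (metis add.right_inverse)
  thus ?thesis by (rule tf)
qed


theorem jt_derivation:
  fixes D :: "'a::ring_1 \<Rightarrow> 'a" and e :: 'a
  assumes J: "\<And>x y. D (x*y*x) = D x * y * x + x * D y * x + x * y * D x"
  and tf: "\<And>z::'a. z + z = 0 \<Longrightarrow> z = 0"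
  and prime: "\<And>a b::'a. (\<And>r. a*r*b = 0) \<Longrightarrow> a = 0 \<or> b = 0"
  and ee: "e*e = e" and e0: "e \<noteq> 0" and e1: "e \<noteq> 1"
  shows "derivation D"
proof -
  define f where "f = 1 - e"
  have ff: "f*f = f" and ef: "e*f = 0" and fe: "f*e = 0" and ef1: "e + f = 1" and f0: "f \<noteq> 0"
    using ee e1 by (simp_all add: f_def algebra_simps)
  have ee': "e*(e*x) = e*x" for x by (simp add: mult.assoc[symmetric] ee)
  have ff': "f*(f*x) = f*x" for x by (simp add: mult.assoc[symmetric] ff)
  have ef': "e*(f*x) = 0" for x by (simp add: mult.assoc[symmetric] ef)
  have fe': "f*(e*x) = 0" for x by (simp add: mult.assoc[symmetric] fe)
  note pe = mult.assoc ee ff ef fe ee' ff' ef' fe'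
  have D1: "D 1 = 0" using J[of 1 1] tf[of "D 1"] by (simp add: algebra_simps)
  have hDe: "D e = D e * e + e * D e" using J[of e 1] by (simp add: D1 ee)
  have eDe: "e * D e * e = 0"
  proof -
    have "e * D e * e = e * (D e * e + e * D e) * e" using hDe by (rule arg_cong)
    hence "e * D e * e + e * D e * e = 0" by (simp add: algebra_simps pe)
    thus ?thesis by (rule tf)
  qed
  have fDf: "f * D e * f = 0"
  proof -
    have "f * D e * f = f * (D e * e + e * D e) * f" using hDe by (rule arg_cong)
    thus ?thesis by (simp add: algebra_simps pe)
  qed
  have decDe: "D e = e*D e*f + f*D e*e"
  proof -
    have "(e+f)*D e*(e+f) = e*D e*e + e*D e*f + f*D e*e + f*D e*f" by (simp add: algebra_simps)
    thus ?thesis using eDe fDf by (simp add: ef1)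
  qed
  define S where "S = e*D e*f - f*D e*e"
  define E where "E x = D x + S*x - x*S" for x
  have JE: "E (x*y*x) = E x * y * x + x * E y * x + x * y * E x" for x y
    unfolding E_def J by (simp add: algebra_simps)
  have Ee: "E e = 0"
  proof -
    have "E e = D e - (e*D e*f + f*D e*e)" unfolding E_def S_def by (simp add: algebra_simps pe)
    thus ?thesis using decDe by simp
  qed
  have Ef: "E f = 0"
    by (rule Df_lemma[of E e f, OF JE tf ee ff ef fe ef1 Ee])
  interpret jt E e f
  proof
    show "\<And>z::'a. z + z = 0 \<Longrightarrow> z = 0" by (rule tf)
    show "\<And>a b::'a. (\<And>r. a*r*b = 0) \<Longrightarrow> a = 0 \<or> b = 0" by (rule prime)
  qed (fact JE ee ff ef fe ef1 e0 f0 Ee Ef)+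
  have addE: "E (x + y) = E x + E y" for x y by (rule ADD)
  have leibE: "E (x*y) = E x*y + x*E y" for x y by (rule LEIB)
  have DE: "D x = E x - S*x + x*S" for x unfolding E_def by simp
  show ?thesis unfolding derivation_def
  proof (intro conjI allI)
    fix x y
    show "D (x + y) = D x + D y" unfolding DE addE by (simp add: algebra_simps)
    show "D (x * y) = D x * y + x * D y" unfolding DE leibE by (simp add: algebra_simps)
  qed
qed


lemma liminf_bound_zero:
  fixes u :: "nat \<Rightarrow> 'b::real_normed_vector"
  assumes "u \<longlonglongrightarrow> L" and "\<And>k. norm (u k) \<le> c k" and "liminf (\<lambda>k. ereal (c k)) = 0"
  shows "L = 0"
proof -
  have "(\<lambda>k. ereal (norm (u k))) \<longlonglongrightarrow> ereal (norm L)"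
    using assms(1) by (intro tendsto_ereal tendsto_norm)
  hence "liminf (\<lambda>k. ereal (norm (u k))) = ereal (norm L)" by (simp add: lim_imp_Liminf)
  moreover have "liminf (\<lambda>k. ereal (norm (u k))) \<le> liminf (\<lambda>k. ereal (c k))"
    by (intro Liminf_mono) (simp add: assms(2))
  ultimately have "ereal (norm L) \<le> 0" using assms(3) by simp
  thus ?thesis by simp
qed

lemma tf_real: "(z::'a::real_vector) + z = 0 \<Longrightarrow> z = 0"
  by (metis scaleR_2 scaleR_eq_0_iff zero_neq_numeral)

theorem theorem3p1:
  fixes h :: "'a::{real_normed_algebra_1, banach} \<Rightarrow> 'a"
    and \<phi> \<psi> :: "'a \<Rightarrow> 'a \<Rightarrow> real"
    and m :: int
  assumes prime: "prime_algebra TYPE('a)"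
    and idem: "\<exists>e::'a. nontrivial_idempotent e"
    and odd_h: "\<And>x. h (- x) = - h x"
    and phi_nonneg: "\<And>x y. \<phi> x y \<ge> 0"
    and psi_nonneg: "\<And>x y. \<psi> x y \<ge> 0"
    and ineq1: "\<And>x y. norm (h (x * y * x) - h x * y * x - x * h y * x - x * y * h x) \<le> \<psi> x y"
    and ineq2: "\<And>x y. norm (h (x + of_int m * y) + h (x - of_int m * y) - 2 * h x
                  + 2 * (of_int m)^2 * h y - (of_int m)^2 * h (2 * y)) \<le> \<phi> x y"
    and m_nz: "m \<noteq> 0" and m_even: "even m"
    and Phi_fin: "\<And>x. summable (\<lambda>k. \<phi> 0 ((2::real)^k *\<^sub>R x) / 2^k)"
    and lim1: "\<And>x y. liminf (\<lambda>k. ereal (\<psi> ((2::real)^k *\<^sub>R x) ((2::real)^k *\<^sub>R y) / 2^(3*k))) = 0"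
    and lim2: "\<And>x y. liminf (\<lambda>k. ereal (\<psi> ((2::real)^k *\<^sub>R x) y / 2^(2*k))) = 0"
  shows "derivation h"
proof -
  have h0: "h 0 = 0"
  proof -
    have "h 0 = - h 0" using odd_h[of 0] by simp
    hence "h 0 + h 0 = 0" by (metis add.right_inverse)
    thus ?thesis by (rule tf_real)
  qed
  have step: "norm (h (2 *\<^sub>R y) - 2 *\<^sub>R h y) \<le> \<phi> 0 y" for y
  proof -
    have mm: "(of_int m :: 'a)^2 * z = real_of_int (m^2) *\<^sub>R z" for z
      by (simp add: scaleR_conv_of_real)
    have two: "(2::'a) * w = 2 *\<^sub>R w" for w
      by (simp add: scaleR_conv_of_real)
    have e1: "h (0 - of_int m * y) = - h (of_int m * y)" using odd_h[of "of_int m * y"] by simp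
    have "h (0 + of_int m * y) + h (0 - of_int m * y) - 2 * h 0
           + 2 * (of_int m)^2 * h y - (of_int m)^2 * h (2 * y)
          = (of_int m)^2 * (2 * h y - h (2 * y))"
    proof -
      have cm: "(2::'a) * (of_int m)^2 = (of_int m)^2 * 2"
        by (metis mult_of_int_commute of_int_power)
      have "(2::'a) * ((of_int m)^2 * h y) = (of_int m)^2 * (2 * h y)"
        by (simp add: mult.assoc[symmetric] cm)
      thus ?thesis unfolding e1 h0 by (simp add: algebra_simps)
    qed
    also have "\<dots> = real_of_int (m^2) *\<^sub>R (2 *\<^sub>R h y - h (2 *\<^sub>R y))"
      unfolding mm two ..
    finally have "norm (real_of_int (m^2) *\<^sub>R (2 *\<^sub>R h y - h (2 *\<^sub>R y))) \<le> \<phi> 0 y"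
      using ineq2[of 0 y] by simp
    hence "real_of_int (m^2) * norm (h (2 *\<^sub>R y) - 2 *\<^sub>R h y) \<le> \<phi> 0 y"
      by (simp add: norm_minus_commute)
    moreover have "1 \<le> real_of_int (m^2)"
    proof -
      have "0 < m^2" using m_nz by simp
      hence "(1::int) \<le> m^2" by linarith
      hence "real_of_int 1 \<le> real_of_int (m^2)" by (simp only: of_int_le_iff)
      thus ?thesis by simp
    qed
    moreover have "0 \<le> norm (h (2 *\<^sub>R y) - 2 *\<^sub>R h y)" by simp
    ultimately show ?thesis
      using mult_right_mono[of 1 "real_of_int (m^2)" "norm (h (2 *\<^sub>R y) - 2 *\<^sub>R h y)"] by linarith
  qed
  define a where "a n z = (1 / 2^n) *\<^sub>R h ((2::real)^n *\<^sub>R z)" for n z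
  have dif: "norm (a (Suc n) z - a n z) \<le> \<phi> 0 ((2::real)^n *\<^sub>R z) / 2^n" for n z
  proof -
    have "a (Suc n) z - a n z = (1 / 2^(Suc n)) *\<^sub>R (h (2 *\<^sub>R ((2::real)^n *\<^sub>R z)) - 2 *\<^sub>R h ((2::real)^n *\<^sub>R z))"
      unfolding a_def by (simp add: scaleR_right_diff_distrib)
    hence "norm (a (Suc n) z - a n z) = (1 / 2^(Suc n)) * norm (h (2 *\<^sub>R ((2::real)^n *\<^sub>R z)) - 2 *\<^sub>R h ((2::real)^n *\<^sub>R z))"
      by simp
    also have "\<dots> \<le> (1 / 2^(Suc n)) * \<phi> 0 ((2::real)^n *\<^sub>R z)"
      by (intro mult_left_mono step) simp
    also have "\<dots> \<le> \<phi> 0 ((2::real)^n *\<^sub>R z) / 2^n"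
      using phi_nonneg[of 0 "(2::real)^n *\<^sub>R z"] by (simp add: field_simps)
    finally show ?thesis .
  qed
  define L where "L z = h z + suminf (\<lambda>k. a (Suc k) z - a k z)" for z
  have conv: "(\<lambda>n. a n z) \<longlonglongrightarrow> L z" for z
  proof -
    have "summable (\<lambda>k. norm (a (Suc k) z - a k z))"
      by (rule summable_comparison_test[OF _ Phi_fin[of z]]) (use dif in auto)
    hence "summable (\<lambda>k. a (Suc k) z - a k z)" by (rule summable_norm_cancel)
    hence "(\<lambda>n. \<Sum>k<n. a (Suc k) z - a k z) \<longlonglongrightarrow> suminf (\<lambda>k. a (Suc k) z - a k z)"
      by (rule summable_LIMSEQ)
    hence "(\<lambda>n. a 0 z + (\<Sum>k<n. a (Suc k) z - a k z)) \<longlonglongrightarrow> a 0 z + suminf (\<lambda>k. a (Suc k) z - a k z)"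
      by (intro tendsto_intros)
    moreover have "a 0 z + (\<Sum>k<n. a (Suc k) z - a k z) = a n z" for n
      using sum_lessThan_telescope[of "\<lambda>k. a k z" n] by simp
    moreover have "a 0 z = h z" by (simp add: a_def)
    ultimately show ?thesis unfolding L_def by simp
  qed
  have sub: "(\<lambda>k. a (c*k) z) \<longlonglongrightarrow> L z" if "c > 0" for c z
  proof -
    have "strict_mono (\<lambda>k::nat. c*k)" using that by (auto simp: strict_mono_def)
    from LIMSEQ_subseq_LIMSEQ[OF conv this] show ?thesis by (simp add: o_def)
  qed
  have eq2: "L (x*y*x) - L x*y*x - x*h y*x - x*y*L x = 0" for x y
  proof (rule liminf_bound_zero)
    show "(\<lambda>k. a (2*k) (x*y*x) - a k x*y*x - x*h y*x - x*y*a k x)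
          \<longlonglongrightarrow> L (x*y*x) - L x*y*x - x*h y*x - x*y*L x"
      by (intro tendsto_intros sub conv) simp
    show "liminf (\<lambda>k. ereal (\<psi> ((2::real)^k *\<^sub>R x) y / 2^(2*k))) = 0" by (rule lim2)
    show "norm (a (2*k) (x*y*x) - a k x*y*x - x*h y*x - x*y*a k x) \<le> \<psi> ((2::real)^k *\<^sub>R x) y / 2^(2*k)" for k
    proof -
      define X where "X = (2::real)^k *\<^sub>R x"
      have "a (2*k) (x*y*x) - a k x*y*x - x*h y*x - x*y*a k x
          = (1/2^(2*k)) *\<^sub>R (h (X*y*X) - h X*y*X - X*h y*X - X*y*h X)"
        unfolding X_def by (rule iden2[OF a_def])
      hence "norm (a (2*k) (x*y*x) - a k x*y*x - x*h y*x - x*y*a k x)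
          = (1/2^(2*k)) * norm (h (X*y*X) - h X*y*X - X*h y*X - X*y*h X)" by simp
      also have "\<dots> \<le> (1/2^(2*k)) * \<psi> X y" by (intro mult_left_mono ineq1) simp
      finally show ?thesis unfolding X_def by simp
    qed
  qed
  have eq3: "L (x*y*x) - L x*y*x - x*L y*x - x*y*L x = 0" for x y
  proof (rule liminf_bound_zero)
    show "(\<lambda>k. a (3*k) (x*y*x) - a k x*y*x - x*a k y*x - x*y*a k x)
          \<longlonglongrightarrow> L (x*y*x) - L x*y*x - x*L y*x - x*y*L x"
      by (intro tendsto_intros sub conv) simp
    show "liminf (\<lambda>k. ereal (\<psi> ((2::real)^k *\<^sub>R x) ((2::real)^k *\<^sub>R y) / 2^(3*k))) = 0" by (rule lim1)
    show "norm (a (3*k) (x*y*x) - a k x*y*x - x*a k y*x - x*y*a k x)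
          \<le> \<psi> ((2::real)^k *\<^sub>R x) ((2::real)^k *\<^sub>R y) / 2^(3*k)" for k
    proof -
      define X where "X = (2::real)^k *\<^sub>R x"
      define Y where "Y = (2::real)^k *\<^sub>R y"
      have "a (3*k) (x*y*x) - a k x*y*x - x*a k y*x - x*y*a k x
          = (1/2^(3*k)) *\<^sub>R (h (X*Y*X) - h X*Y*X - X*h Y*X - X*Y*h X)"
        unfolding X_def Y_def by (rule iden3[OF a_def])
      hence "norm (a (3*k) (x*y*x) - a k x*y*x - x*a k y*x - x*y*a k x)
          = (1/2^(3*k)) * norm (h (X*Y*X) - h X*Y*X - X*h Y*X - X*Y*h X)" by simp
      also have "\<dots> \<le> (1/2^(3*k)) * \<psi> X Y" by (intro mult_left_mono ineq1) simp
      finally show ?thesis unfolding X_def Y_def by simp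
    qed
  qed
  have hL: "h y = L y" for y
  proof -
    have "h y - L y = 0" using eq2[of 1 y] eq3[of 1 y] by (simp add: algebra_simps)
    thus ?thesis by simp
  qed
  have J: "h (x*y*x) = h x * y * x + x * h y * x + x * y * h x" for x y
    using eq3[of x y] unfolding hL[symmetric] by (simp add: algebra_simps)
  obtain e :: 'a where e: "nontrivial_idempotent e" using idem by blast
  show ?thesis
  proof (rule jt_derivation[of h e])
    show "h (x*y*x) = h x * y * x + x * h y * x + x * y * h x" for x y by (rule J)
    show "z + z = 0 \<Longrightarrow> z = 0" for z :: 'a by (rule tf_real)
    show "(\<And>r. a*r*b = 0) \<Longrightarrow> a = 0 \<or> b = 0" for a b :: 'a
      using prime unfolding prime_algebra_def by blast
  qed (use e in \<open>auto simp: nontrivial_idempotent_def\<close>)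
qed


end
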